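(* Let $k\le l$ be positive integers with $\gcd(k,l)=1$, let $n\ge1$ and $q\ge 0$ be integers, and let $m=qn$ (i.e. the remainder of $m$ modulo $n$ is $r=0$). Then $L^{k,l}(m,n)=nkq$, and this value is attained at the $nk\times nl$ matrix all of whose entries equal $q$.
   Context: $\mathcal D^{k,l}(m,n)$ denotes the set of all $nk\times nl$ matrices with nonnegative integer entries all of whose row sums equal $ml$ and all of whose column sums equal $mk$. For an $s\times t$ matrix $A=(a_{ij})$ with $s\le t$, a transversal of $A$ is a set of entries $T=\{a_{1i_1},\dots,a_{si_s}\}$ with $i_1,\dots,i_s\in\{1,\dots,t\}$ pairwise distinct, and $|T|=a_{1i_1}+\cdots+a_{si_s}$; if $s>t$, the transversals of $A$ are those of its transpose. The tropical determinant is ${\rm tdet}(A)=\max_T|T|$, and $L^{k,l}(m,n)=\min_{A\in\mathcal D^{k,l}(m,n)}{\rm tdet}(A)$. *)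

theory Defs
  imports Main "HOL-Library.FuncSet"
begin

text \<open>An s x t matrix with nonnegative integer entries is a function
  A :: nat => nat => nat, of which only the entries A i j with i < s, j < t matter
  (rows and columns indexed from 0).\<close>

definition Dmat :: "nat \<Rightarrow> nat \<Rightarrow> nat \<Rightarrow> nat \<Rightarrow> (nat \<Rightarrow> nat \<Rightarrow> nat) set" where
  "Dmat k l m n = {A. (\<forall>i<n*k. (\<Sum>j<n*l. A i j) = m*l) \<and> (\<forall>j<n*l. (\<Sum>i<n*k. A i j) = m*k)}"

definition transversal_weights :: "nat \<Rightarrow> nat \<Rightarrow> (nat \<Rightarrow> nat \<Rightarrow> nat) \<Rightarrow> nat set" where
  "transversal_weights s t A =
     (if s \<le> t then {(\<Sum>i<s. A i (\<sigma> i)) | \<sigma>. \<sigma> \<in> {..<s} \<rightarrow>\<^sub>E {..<t} \<and> inj_on \<sigma> {..<s}}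
      else {(\<Sum>j<t. A (\<sigma> j) j) | \<sigma>. \<sigma> \<in> {..<t} \<rightarrow>\<^sub>E {..<s} \<and> inj_on \<sigma> {..<t}})"

definition tdet :: "nat \<Rightarrow> nat \<Rightarrow> (nat \<Rightarrow> nat \<Rightarrow> nat) \<Rightarrow> nat" where
  "tdet s t A = Max (transversal_weights s t A)"

definition Lval :: "nat \<Rightarrow> nat \<Rightarrow> nat \<Rightarrow> nat \<Rightarrow> nat" where
  "Lval k l m n = Inf {tdet (n*k) (n*l) A | A. A \<in> Dmat k l m n}"

end

theory Submission
  imports Defs
begin

lemma modsmall: "a < N \<Longrightarrow> x < (N::nat) \<Longrightarrow> (a + x) mod N = (if a + x < N then a + x else a + x - N)"
  by (simp add: mod_if)

lemma shift_bij: "bij_betw (\<lambda>c. (i+c) mod N) {..<N} {..<(N::nat)}"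
proof (cases "N = 0")
  case True then show ?thesis by simp
next
  case False
  have "inj_on (\<lambda>c. (i+c) mod N) {..<N}"
  proof
    fix x y assume x: "x \<in> {..<N}" and y: "y \<in> {..<N}" and e: "(i+x) mod N = (i+y) mod N"
    have a: "i mod N < N" using x by simp
    have "(i mod N + x) mod N = (i mod N + y) mod N" using e by (simp add: mod_add_left_eq)
    then show "x = y" using modsmall[OF a, of x] modsmall[OF a, of y] x y
      by (simp split: if_splits)
  qed
  moreover have "(\<lambda>c. (i+c) mod N) ` {..<N} \<subseteq> {..<N}" using False by auto
  ultimately show ?thesis
    by (simp add: bij_betw_def endo_inj_surj)
qed

lemma shift_sum: "(\<Sum>c<N. f ((i+c) mod N)) = (\<Sum>j<(N::nat). (f j :: nat))"
  using sum.reindex_bij_betw[OF shift_bij, of f i N] by simp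

lemma tw_finite: "finite (transversal_weights s t A)"
  unfolding transversal_weights_def
  by (auto simp: finite_PiE setcompr_eq_image)

lemma tw_nonempty: "s \<le> t \<Longrightarrow> (\<Sum>i<s. A i (if i < s then i else undefined)) \<in> transversal_weights s t A"
  unfolding transversal_weights_def
  by (auto intro!: exI[of _ "\<lambda>i. if i < s then i else undefined"] simp: inj_on_def PiE_def extensional_def)

lemma lower:
  assumes kl: "k \<le> l" and k: "0 < k" and n: "1 \<le> n" and m: "m = q*n" and A: "A \<in> Dmat k l m n"
  shows "n*k*q \<le> tdet (n*k) (n*l) A"
proof -
  define N where "N = n*l"
  define S where "S = n*k"
  have SN: "S \<le> N" using kl by (simp add: S_def N_def)
  have Npos: "0 < N" using kl k n by (simp add: N_def)
  define W where "W c = (\<Sum>i<S. A i ((i+c) mod N))" for c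
  have rows: "\<And>i. i < S \<Longrightarrow> (\<Sum>j<N. A i j) = m*l" using A by (simp add: Dmat_def S_def N_def)
  have "(\<Sum>c<N. W c) = (\<Sum>i<S. \<Sum>c<N. A i ((i+c) mod N))"
    unfolding W_def by (rule sum.swap)
  also have "\<dots> = (\<Sum>i<S. m*l)" using rows by (simp add: shift_sum)
  also have "\<dots> = N * (n*k*q)" by (simp add: m S_def N_def)
  finally have tot: "(\<Sum>c<N. W c) = N * (n*k*q)" .
  have "\<exists>c<N. n*k*q \<le> W c"
  proof (rule ccontr)
    assume "\<not> ?thesis"
    hence "\<forall>c\<in>{..<N}. W c < n*k*q" by auto
    hence "(\<Sum>c<N. W c) < (\<Sum>c<N. n*k*q)"
      using Npos by (intro sum_strict_mono) auto
    with tot show False by simp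
  qed
  then obtain c where c: "c < N" "n*k*q \<le> W c" by blast
  define \<sigma> where "\<sigma> i = (if i < S then (i+c) mod N else undefined)" for i
  have "W c = (\<Sum>i<S. A i (\<sigma> i))" unfolding W_def \<sigma>_def by simp
  moreover have "\<sigma> \<in> {..<S} \<rightarrow>\<^sub>E {..<N}" using Npos by (auto simp: \<sigma>_def PiE_def extensional_def)
  moreover have "inj_on \<sigma> {..<S}"
  proof -
    have "inj_on (\<lambda>i. (c+i) mod N) {..<N}" using shift_bij[of c N] by (simp add: bij_betw_def)
    hence "inj_on (\<lambda>i. (c+i) mod N) {..<S}" by (rule inj_on_subset) (use SN in auto)
    thus ?thesis unfolding inj_on_def \<sigma>_def by (simp add: add.commute)
  qed
  ultimately have "W c \<in> transversal_weights S N A"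
    using SN unfolding transversal_weights_def by auto
  hence "W c \<le> tdet S N A" unfolding tdet_def by (rule Max_ge[OF tw_finite])
  with c show ?thesis by (simp add: S_def N_def)
qed

theorem corollary4p1:
  fixes k l n q m :: nat
  assumes "0 < k" and "k \<le> l" and "coprime k l" and "1 \<le> n" and "m = q * n"
  shows "Lval k l m n = n * k * q
         \<and> (\<lambda>i j. q) \<in> Dmat k l m n
         \<and> tdet (n*k) (n*l) (\<lambda>i j. q) = n * k * q"
proof -
  have D: "(\<lambda>i j. q) \<in> Dmat k l m n" using assms by (simp add: Dmat_def)
  have SN: "n*k \<le> n*l" using assms by simp
  have up: "\<forall>x \<in> transversal_weights (n*k) (n*l) (\<lambda>i j. q). x = n*k*q"
    using SN unfolding transversal_weights_def by auto
  have ne: "transversal_weights (n*k) (n*l) (\<lambda>i j. q) \<noteq> {}" using tw_nonempty[OF SN] by blast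
  have T: "tdet (n*k) (n*l) (\<lambda>i j. q) = n*k*q"
  proof -
    obtain x where x: "x \<in> transversal_weights (n*k) (n*l) (\<lambda>i j. q)" using ne by blast
    have "transversal_weights (n*k) (n*l) (\<lambda>i j. q) = {n*k*q}"
    proof
      show "transversal_weights (n*k) (n*l) (\<lambda>i j. q) \<subseteq> {n*k*q}" using up by blast
      show "{n*k*q} \<subseteq> transversal_weights (n*k) (n*l) (\<lambda>i j. q)" using up x by auto
    qed
    thus ?thesis by (simp add: tdet_def)
  qed
  have L: "Lval k l m n = n*k*q"
    unfolding Lval_def
  proof (rule cInf_eq_minimum)
    show "n*k*q \<in> {tdet (n*k) (n*l) A |A. A \<in> Dmat k l m n}" using D T by force
    fix x assume "x \<in> {tdet (n*k) (n*l) A |A. A \<in> Dmat k l m n}"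
    then show "n*k*q \<le> x" using lower[OF assms(2,1,4,5)] by auto
  qed
  show ?thesis using L D T by simp
qed

end
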